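(* In each of the following pairs $(\mathfrak g,\mathfrak g_0)$ of real $4$-dimensional Lie algebras, $\mathfrak g_0$ is not a (continuous or sequential) contraction of $\mathfrak g$ over $\mathbb R$: $(so(3)\oplus A_1,\,A_{4.8}^{-1})$, $(so(3)\oplus A_1,\,A_{3.4}^{-1}\oplus A_1)$, $(A_{4.8}^{-1},\,A_{3.5}^0\oplus A_1)$, $(A_{4.9}^0,\,A_{3.4}^{-1}\oplus A_1)$, $(A_{4.10},\,A_{4.3})$, $(A_{4.10},\,A_{2.1}\oplus2A_1)$, $(A_{4.10},\,A_{3.4}^a\oplus A_1)$ for every $a$ with $0<|a|<1$, and $(2A_{2.1},\,A_{3.5}^b\oplus A_1)$ for every $b>0$.
   Context: All algebras have basis $e_1,\dots,e_4$; only nonzero brackets (up to antisymmetry) are listed. $so(3)\oplus A_1$: $[e_1,e_2]=e_3$, $[e_2,e_3]=e_1$, $[e_3,e_1]=e_2$. $A_{4.8}^{-1}$: $[e_2,e_3]=e_1$, $[e_2,e_4]=e_2$, $[e_3,e_4]=-e_3$. $A_{3.4}^{-1}\oplus A_1$: $[e_1,e_3]=e_1$, $[e_2,e_3]=-e_2$. $A_{3.5}^0\oplus A_1$: $[e_1,e_3]=-e_2$, $[e_2,e_3]=e_1$. $A_{4.9}^0$: $[e_2,e_3]=e_1$, $[e_2,e_4]=-e_3$, $[e_3,e_4]=e_2$. $A_{4.10}$: $[e_1,e_3]=e_1$, $[e_2,e_3]=e_2$, $[e_1,e_4]=-e_2$, $[e_2,e_4]=e_1$. $A_{4.3}$: $[e_1,e_4]=e_1$,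 $[e_3,e_4]=e_2$. $A_{2.1}\oplus2A_1$: $[e_1,e_2]=e_1$. $A_{3.4}^a\oplus A_1$: $[e_1,e_3]=e_1$, $[e_2,e_3]=ae_2$. $2A_{2.1}$: $[e_1,e_2]=e_1$, $[e_3,e_4]=e_3$. $A_{3.5}^b\oplus A_1$: $[e_1,e_3]=be_1-e_2$, $[e_2,e_3]=e_1+be_2$. Continuous contraction of $\mathfrak g=(V,[\cdot,\cdot])$: for continuous $U:(0,1]\to GL(V)$, the algebra $(V,[\cdot,\cdot]_0)$ with $[x,y]_0=\lim_{\varepsilon\to0^+}U_\varepsilon^{-1}[U_\varepsilon x,U_\varepsilon y]$ when this limit exists for all $x,y$; sequential contraction: same with a sequence $U_p\in GL(V)$ and $p\to\infty$. "Contraction of $\mathfrak g$ is $\mathfrak g_0$" means the resulting algebra is isomorphic to $\mathfrak g_0$. *)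

theory Defs
  imports "HOL-Analysis.Analysis"
begin

text \<open>Vectors of the 4-dimensional real space; basis vector e_k is axis k 1
  (indices 1,2,3,4 of the numeral type 4).\<close>

definition e :: "4 \<Rightarrow> real^4" where "e k = axis k 1"

text \<open>Bilinear antisymmetric bracket determined by a list of nonzero brackets
  [e_i, e_j] = v (given for i before j; antisymmetry supplies the rest).\<close>

definition lie_br :: "(4 \<times> 4 \<times> (real^4)) list \<Rightarrow> real^4 \<Rightarrow> real^4 \<Rightarrow> real^4" where
  "lie_br L x y = (\<Sum>(i,j,v)\<leftarrow>L. (x$i * y$j - x$j * y$i) *\<^sub>R v)"

definition so3_A1 where "so3_A1 = lie_br [(1,2,e 3), (2,3,e 1), (3,1,e 2)]"
definition A4_8m1 where "A4_8m1 = lie_br [(2,3,e 1), (2,4,e 2), (3,4,- e 3)]"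
definition A3_4m1_A1 where "A3_4m1_A1 = lie_br [(1,3,e 1), (2,3,- e 2)]"
definition A3_5_0_A1 where "A3_5_0_A1 = lie_br [(1,3,- e 2), (2,3,e 1)]"
definition A4_9_0 where "A4_9_0 = lie_br [(2,3,e 1), (2,4,- e 3), (3,4,e 2)]"
definition A4_10 where "A4_10 = lie_br [(1,3,e 1), (2,3,e 2), (1,4,- e 2), (2,4,e 1)]"
definition A4_3 where "A4_3 = lie_br [(1,4,e 1), (3,4,e 2)]"
definition A2_1_2A1 where "A2_1_2A1 = lie_br [(1,2,e 1)]"
definition A3_4_A1 :: "real \<Rightarrow> real^4 \<Rightarrow> real^4 \<Rightarrow> real^4" where
  "A3_4_A1 a = lie_br [(1,3,e 1), (2,3,a *\<^sub>R e 2)]"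
definition two_A2_1 where "two_A2_1 = lie_br [(1,2,e 1), (3,4,e 3)]"
definition A3_5_A1 :: "real \<Rightarrow> real^4 \<Rightarrow> real^4 \<Rightarrow> real^4" where
  "A3_5_A1 b = lie_br [(1,3,b *\<^sub>R e 1 - e 2), (2,3,e 1 + b *\<^sub>R e 2)]"

definition lie_iso :: "(real^4 \<Rightarrow> real^4 \<Rightarrow> real^4) \<Rightarrow> (real^4 \<Rightarrow> real^4 \<Rightarrow> real^4) \<Rightarrow> bool" where
  "lie_iso b b' \<longleftrightarrow> (\<exists>A :: real^4^4. invertible A \<and>
      (\<forall>x y. A *v b x y = b' (A *v x) (A *v y)))"

definition cont_contraction :: "(real^4 \<Rightarrow> real^4 \<Rightarrow> real^4) \<Rightarrow> (real^4 \<Rightarrow> real^4 \<Rightarrow> real^4) \<Rightarrow> bool" where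
  "cont_contraction g g0 \<longleftrightarrow> (\<exists>(U :: real \<Rightarrow> real^4^4) b0.
      continuous_on {0<..1} U \<and> (\<forall>\<epsilon>\<in>{0<..1}. invertible (U \<epsilon>)) \<and>
      (\<forall>x y. ((\<lambda>\<epsilon>. matrix_inv (U \<epsilon>) *v g (U \<epsilon> *v x) (U \<epsilon> *v y)) \<longlongrightarrow> b0 x y) (at_right 0)) \<and>
      lie_iso b0 g0)"

definition seq_contraction :: "(real^4 \<Rightarrow> real^4 \<Rightarrow> real^4) \<Rightarrow> (real^4 \<Rightarrow> real^4 \<Rightarrow> real^4) \<Rightarrow> bool" where
  "seq_contraction g g0 \<longleftrightarrow> (\<exists>(U :: nat \<Rightarrow> real^4^4) b0.
      (\<forall>p. invertible (U p)) \<and>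
      (\<forall>x y. (\<lambda>p. matrix_inv (U p) *v g (U p *v x) (U p *v y)) \<longlonglongrightarrow> b0 x y) \<and>
      lie_iso b0 g0)"

definition not_contraction where
  "not_contraction g g0 \<longleftrightarrow> \<not> cont_contraction g g0 \<and> \<not> seq_contraction g g0"

end

theory Submission
  imports Defs
begin

lemma minv: assumes "invertible (A::real^4^4)"
  shows "A ** matrix_inv A = mat 1" "matrix_inv A ** A = mat 1"
proof -
  have "\<exists>A'::real^4^4. A ** A' = mat 1 \<and> A' ** A = mat 1" using assms by (simp add: invertible_def)
  then have "A ** matrix_inv A = mat 1 \<and> matrix_inv A ** A = mat 1"
    unfolding matrix_inv_def by (rule someI_ex)
  then show "A ** matrix_inv A = mat 1" "matrix_inv A ** A = mat 1" by auto
qed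

definition adT :: "(real^4 \<Rightarrow> real^4 \<Rightarrow> real^4) \<Rightarrow> real^4 \<Rightarrow> real" where
  "adT B x = (\<Sum>i\<in>UNIV. B x (axis i 1) $ i)"
definition adK :: "(real^4 \<Rightarrow> real^4 \<Rightarrow> real^4) \<Rightarrow> real^4 \<Rightarrow> real" where
  "adK B x = (\<Sum>i\<in>UNIV. \<Sum>j\<in>UNIV. B x (axis j 1) $ i * B x (axis i 1) $ j)"
definition Finv where "Finv (\<alpha>::real) (\<beta>::real) B x = \<alpha> * (adT B x)^2 + \<beta> * adK B x"

lemma adT_trace: "adT B x = trace (matrix (B x))"
  by (simp add: adT_def trace_def matrix_def)
lemma adK_trace: "adK B x = trace (matrix (B x) ** matrix (B x))"
  by (simp add: adK_def trace_def matrix_def matrix_matrix_mult_def)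

lemma conj_matrix:
  assumes lin: "linear (g (U *v x))" and inv: "invertible (U::real^4^4)"
  shows "matrix (\<lambda>y. matrix_inv U *v g (U *v x) (U *v y)) = matrix_inv U ** matrix (g (U *v x)) ** U"
proof -
  have "(\<lambda>y. matrix_inv U *v g (U *v x) (U *v y)) = (\<lambda>y. (matrix_inv U ** matrix (g (U *v x)) ** U) *v y)"
    using matrix_works[of "g (U *v x)"] lin
    by (simp add: matrix_vector_mul_assoc[symmetric] linear_matrix_vector_mul_eq)
  then show ?thesis by simp
qed

lemma Finv_conj:
  assumes lin: "\<And>x. linear (g x)" and inv: "invertible (U::real^4^4)"
  shows "Finv \<alpha> \<beta> (\<lambda>x y. matrix_inv U *v g (U *v x) (U *v y)) x = Finv \<alpha> \<beta> g (U *v x)"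
proof -
  let ?M = "matrix (g (U *v x))"
  let ?V = "matrix_inv U"
  have cm: "matrix (\<lambda>y. ?V *v g (U *v x) (U *v y)) = ?V ** ?M ** U"
    by (rule conj_matrix[OF lin inv])
  have tr: "trace (?V ** N ** U) = trace N" for N :: "real^4^4"
  proof -
    have "trace (?V ** N ** U) = trace (U ** (?V ** N))" by (rule trace_mul_sym)
    also have "U ** (?V ** N) = (U ** ?V) ** N" by (simp add: matrix_mul_assoc)
    also have "\<dots> = N" by (simp add: minv(1)[OF inv])
    finally show ?thesis .
  qed
  have t1: "trace (?V ** ?M ** U) = trace ?M" by (rule tr)
  have "(?V ** ?M ** U) ** (?V ** ?M ** U) = ?V ** ?M ** (U ** ?V) ** ?M ** U"
    by (simp add: matrix_mul_assoc)
  also have "\<dots> = ?V ** (?M ** ?M) ** U"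
    by (simp add: minv(1)[OF inv] matrix_mul_assoc)
  finally have t2: "trace ((?V ** ?M ** U) ** (?V ** ?M ** U)) = trace (?M ** ?M)"
    using tr by simp
  show ?thesis
    unfolding Finv_def adT_trace adK_trace cm t1 t2 by simp
qed


lemma lie_br_add: "lie_br L x (y + z) = lie_br L x y + lie_br L x z"
  by (induction L) (auto simp: lie_br_def algebra_simps)
lemma lie_br_scale: "lie_br L x (c *\<^sub>R y) = c *\<^sub>R lie_br L x y"
  by (induction L) (auto simp: lie_br_def algebra_simps)
lemma lie_br_linear: "linear (lie_br L x)"
  by (rule linearI) (simp_all add: lie_br_add lie_br_scale)

lemma seq_gen:
  assumes lg: "\<And>x. linear (g x)" and lg0: "\<And>x. linear (g0 x)"
   and pos: "\<And>x. Finv \<alpha> \<beta> g x \<ge> 0" and neg: "Finv \<alpha> \<beta> g0 w < 0"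
  shows "\<not> seq_contraction g g0"
proof
  assume "seq_contraction g g0"
  then obtain U b0 where inv0: "\<forall>p. invertible (U p)"
    and lim: "\<forall>x y. (\<lambda>p. matrix_inv (U p) *v g (U p *v x) (U p *v y)) \<longlonglongrightarrow> b0 x y"
    and iso: "lie_iso b0 g0"
    unfolding seq_contraction_def by blast
  from iso obtain A where iA: "invertible A" and hA0: "\<forall>x y. A *v b0 x y = g0 (A *v x) (A *v y)"
    unfolding lie_iso_def by blast
  have hA: "A *v b0 x y = g0 (A *v x) (A *v y)" for x y using hA0 by blast
  have inv: "invertible (U p)" for p using inv0 by blast
  have b0eq: "b0 = (\<lambda>x y. matrix_inv A *v g0 (A *v x) (A *v y))"
  proof (intro ext)
    fix x y
    have "b0 x y = (matrix_inv A ** A) *v b0 x y" by (simp add: minv(2)[OF iA])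
    also have "\<dots> = matrix_inv A *v g0 (A *v x) (A *v y)"
      by (simp add: matrix_vector_mul_assoc[symmetric] hA)
    finally show "b0 x y = matrix_inv A *v g0 (A *v x) (A *v y)" .
  qed
  have "Finv \<alpha> \<beta> b0 (matrix_inv A *v w) = Finv \<alpha> \<beta> g0 (A *v (matrix_inv A *v w))"
    unfolding b0eq by (rule Finv_conj[OF lg0 iA])
  also have "A *v (matrix_inv A *v w) = w"
    by (simp add: matrix_vector_mul_assoc minv(1)[OF iA])
  finally have n: "Finv \<alpha> \<beta> b0 (matrix_inv A *v w) < 0" using neg by simp
  have "(\<lambda>p. Finv \<alpha> \<beta> (\<lambda>x y. matrix_inv (U p) *v g (U p *v x) (U p *v y)) z) \<longlonglongrightarrow> Finv \<alpha> \<beta> b0 z" for z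
  proof -
    have comp: "(\<lambda>p. (matrix_inv (U p) *v g (U p *v z) (U p *v v)) $ i) \<longlonglongrightarrow> b0 z v $ i" for v i
      using lim by (intro tendsto_vec_nth) blast
    show ?thesis unfolding Finv_def adT_def adK_def
      by (intro tendsto_intros comp)
  qed
  moreover have "Finv \<alpha> \<beta> (\<lambda>x y. matrix_inv (U p) *v g (U p *v x) (U p *v y)) z \<ge> 0" for p z
    using Finv_conj[of g, OF lg inv] pos by simp
  ultimately have "Finv \<alpha> \<beta> b0 z \<ge> 0" for z
    by (meson LIMSEQ_le_const)
  with n show False by (metis not_le)
qed

lemma cont_imp_seq:
  assumes "cont_contraction g g0" shows "seq_contraction g g0"
proof -
  obtain U :: "real \<Rightarrow> real^4^4" and b0 where inv: "\<forall>\<epsilon>\<in>{0<..1}. invertible (U \<epsilon>)"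
    and lim0: "\<forall>x y. ((\<lambda>\<epsilon>. matrix_inv (U \<epsilon>) *v g (U \<epsilon> *v x) (U \<epsilon> *v y)) \<longlongrightarrow> b0 x y) (at_right 0)"
    and iso: "lie_iso b0 g0"
    using assms unfolding cont_contraction_def by blast
  note lim = lim0[rule_format]
  have f: "filterlim (\<lambda>n. inverse (real (Suc n))) (at_right 0) sequentially"
    by (rule tendsto_imp_filterlim_at_right[OF LIMSEQ_inverse_real_of_nat]) auto
  have H: "(\<forall>p. invertible (U (inverse (real (Suc p))))) \<and>
      (\<forall>x y. (\<lambda>p. matrix_inv (U (inverse (real (Suc p)))) *v g (U (inverse (real (Suc p))) *v x) (U (inverse (real (Suc p))) *v y)) \<longlonglongrightarrow> b0 x y) \<and>
      lie_iso b0 g0"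
  proof (intro conjI allI iso)
    fix p show "invertible (U (inverse (real (Suc p))))"
      using inv by (auto simp: field_simps)
  next
    fix x y show "(\<lambda>p. matrix_inv (U (inverse (real (Suc p)))) *v g (U (inverse (real (Suc p))) *v x) (U (inverse (real (Suc p))) *v y)) \<longlonglongrightarrow> b0 x y"
      using filterlim_compose[OF lim f] .
  qed
  show ?thesis unfolding seq_contraction_def
    apply (rule exI[where x="\<lambda>p. U (inverse (real (Suc p)))"])
    apply (rule exI[where x=b0])
    using H by simp
qed

lemma not_contr_gen:
  assumes "\<And>x. linear (g x)" "\<And>x. linear (g0 x)"
   "\<And>x. Finv \<alpha> \<beta> g x \<ge> 0" "Finv \<alpha> \<beta> g0 w < 0"
  shows "not_contraction g g0"
  using seq_gen[OF assms] cont_imp_seq unfolding not_contraction_def by blast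

lemmas cs = adT_def adK_def lie_br_def e_def sum_4 axis_def power2_eq_square algebra_simps
  so3_A1_def A4_8m1_def A3_4m1_A1_def A3_5_0_A1_def A4_9_0_def A4_10_def A4_3_def A2_1_2A1_def
  A3_4_A1_def two_A2_1_def A3_5_A1_def

lemma lins: "linear (so3_A1 x)" "linear (A4_8m1 x)" "linear (A3_4m1_A1 x)" "linear (A3_5_0_A1 x)"
  "linear (A4_9_0 x)" "linear (A4_10 x)" "linear (A4_3 x)" "linear (A2_1_2A1 x)"
  "linear (A3_4_A1 a x)" "linear (two_A2_1 x)" "linear (A3_5_A1 b x)"
  by (simp_all add: so3_A1_def A4_8m1_def A3_4m1_A1_def A3_5_0_A1_def A4_9_0_def A4_10_def A4_3_def
     A2_1_2A1_def A3_4_A1_def two_A2_1_def A3_5_A1_def lie_br_linear)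

lemma v1: "adK so3_A1 x = -2*(x$1^2+x$2^2+x$3^2)" by (simp add: cs)
lemma v2: "adK A4_8m1 x = 2*x$4^2" by (simp add: cs)
lemma v3: "adK A4_9_0 x = -2*x$4^2" by (simp add: cs)
lemma v4: "adT A4_10 x = -2 * x$3" by (simp add: cs)
lemma v5: "adK A4_10 x = 2 * x$3^2 - 2*x$4^2" by (simp add: cs)
lemma v6: "adT two_A2_1 x = -(x$2 + x$4)" by (simp add: cs)
lemma v7: "adK two_A2_1 x = x$2^2 + x$4^2" by (simp add: cs)
lemma w1: "adK A4_8m1 (e 4) = 2" by (simp add: cs)
lemma w2: "adK A3_4m1_A1 (e 3) = 2" by (simp add: cs)
lemma w3: "adK A3_5_0_A1 (e 3) = -2" by (simp add: cs)
lemma w4: "adT A4_3 (e 4) = -1" "adK A4_3 (e 4) = 1" by (simp_all add: cs)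
lemma w5: "adT A2_1_2A1 (e 2) = -1" "adK A2_1_2A1 (e 2) = 1" by (simp_all add: cs)
lemma w6: "adT (A3_4_A1 a) (e 3) = -(1+a)" "adK (A3_4_A1 a) (e 3) = 1+a^2" by (simp_all add: cs)
lemma w7: "adT (A3_5_A1 b) (e 3) = -2*b" "adK (A3_5_A1 b) (e 3) = 2*b^2-2" by (simp_all add: cs)

theorem mainTheorem8:
  shows "not_contraction so3_A1 A4_8m1 \<and>
    not_contraction so3_A1 A3_4m1_A1 \<and>
    not_contraction A4_8m1 A3_5_0_A1 \<and>
    not_contraction A4_9_0 A3_4m1_A1 \<and>
    not_contraction A4_10 A4_3 \<and>
    not_contraction A4_10 A2_1_2A1 \<and>
    (\<forall>a::real. 0 < \<bar>a\<bar> \<and> \<bar>a\<bar> < 1 \<longrightarrow> not_contraction A4_10 (A3_4_A1 a)) \<and>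
    (\<forall>b::real. 0 < b \<longrightarrow> not_contraction two_A2_1 (A3_5_A1 b))"
proof (intro conjI allI impI)
  show "not_contraction so3_A1 A4_8m1"
    apply (rule not_contr_gen[where \<alpha>=0 and \<beta>="-1" and w="e 4"])
    apply (simp_all add: lins Finv_def v1 w1)
    apply (smt (verit) zero_le_power2)?
    done
  show "not_contraction so3_A1 A3_4m1_A1"
    apply (rule not_contr_gen[where \<alpha>=0 and \<beta>="-1" and w="e 3"])
    apply (simp_all add: lins Finv_def v1 w2)
    apply (smt (verit) zero_le_power2)?
    done
  show "not_contraction A4_8m1 A3_5_0_A1"
    apply (rule not_contr_gen[where \<alpha>=0 and \<beta>="1" and w="e 3"])
    apply (simp_all add: lins Finv_def v2 w3)
    apply (smt (verit) zero_le_power2)?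
    done
  show "not_contraction A4_9_0 A3_4m1_A1"
    apply (rule not_contr_gen[where \<alpha>=0 and \<beta>="-1" and w="e 3"])
    apply (simp_all add: lins Finv_def v3 w2)
    apply (smt (verit) zero_le_power2)?
    done
  show "not_contraction A4_10 A4_3"
    apply (rule not_contr_gen[where \<alpha>=1 and \<beta>="-2" and w="e 4"])
    apply (simp_all add: lins Finv_def v4 v5 w4 power2_eq_square)
    apply (smt (verit) zero_le_power2)?
    done
  show "not_contraction A4_10 A2_1_2A1"
    apply (rule not_contr_gen[where \<alpha>=1 and \<beta>="-2" and w="e 2"])
    apply (simp_all add: lins Finv_def v4 v5 w5 power2_eq_square)
    apply (smt (verit) zero_le_power2)?
    done
next
  fix a :: real assume a: "0 < \<bar>a\<bar> \<and> \<bar>a\<bar> < 1"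
  have "(1+a)^2 - 2*(1+a^2) = -((1-a)^2)" by (simp add: power2_eq_square algebra_simps)
  moreover have "(1-a)^2 > 0" using a by auto
  ultimately have neg: "(1+a)^2 - 2*(1+a^2) < 0" by linarith
  have neg2: "Finv 1 (-2) (A3_4_A1 a) (e 3) < 0" unfolding Finv_def w6 power2_minus using neg by linarith
  show "not_contraction A4_10 (A3_4_A1 a)"
    apply (rule not_contr_gen[where \<alpha>=1 and \<beta>="-2" and w="e 3"])
       apply (simp_all only: lins neg2)
    apply (simp add: Finv_def v4 v5 power2_eq_square)
    done
next
  fix b :: real assume b: "0 < b"
  show "not_contraction two_A2_1 (A3_5_A1 b)"
  proof (rule not_contr_gen[where \<alpha>="-1" and \<beta>="2" and w="e 3"])
    fix x
    have "-1 * (adT two_A2_1 x)^2 + 2 * adK two_A2_1 x = (x$2 - x$4)^2"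
      by (simp add: v6 v7 power2_eq_square algebra_simps)
    then show "0 \<le> Finv (-1) 2 two_A2_1 x" by (simp add: Finv_def)
  next
    show "Finv (-1) 2 (A3_5_A1 b) (e 3) < 0" by (simp add: Finv_def w7 power2_eq_square algebra_simps)
  qed (simp_all add: lins)
qed
end
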